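(* Let $I,J$ be positive integers, let $a_1,\ldots,a_J\in[0,\infty)^I$ be nonzero vectors, and consider the statistical model in which, for a parameter $\theta=(\theta_1,\ldots,\theta_I)\in(0,\infty)^I$, the observed counts $n_1,\ldots,n_J$ are independent with $n_j\sim\mathrm{Poisson}(\theta\cdot a_j)$, with joint probability mass function $$f_\theta(n_1,\ldots,n_J)=\prod_{j=1}^J\frac{(\theta\cdot a_j)^{n_j}e^{-\theta\cdot a_j}}{n_j!}.$$ Let $\mathcal{C}=\{C_1,\ldots,C_K\}$ be the maximal collapsing of $s_1,\ldots,s_J$ and let $T(n_1,\ldots,n_J)=(n_{C_1},\ldots,n_{C_K})$ with $n_{C_k}=\sum_{s_j\in C_k}n_j$. Then $T$ is a minimal sufficient statistic for $\theta$; that is, for any two count vectors $x,y\in\mathbb{Z}_{\ge0}^J$, the ratio $f_\theta(x)/f_\theta(y)$ does not depend on $\theta$ if and only if $T(x)=T(y)$.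
   Context: Read type $s_j$ has sampling rate vector $a_j=(a_{1,j},\ldots,a_{I,j})$ and $\theta\cdot a_j=\sum_i\theta_i a_{i,j}$. A collapsing of $s_1,\ldots,s_J$ is a partition $\{C_1,\ldots,C_K\}$ of $\{s_1,\ldots,s_J\}$ into nonempty disjoint categories such that whenever $s_{j_1},s_{j_2}$ lie in the same category, $a_{j_1}=c\,a_{j_2}$ for some real $c>0$; it is maximal if moreover, for reads $s_{j_1}\in C_{k_1}$, $s_{j_2}\in C_{k_2}$ with $k_1\ne k_2$, there is no real $c>0$ with $a_{j_1}=c\,a_{j_2}$. (Equivalently, the maximal collapsing groups reads exactly according to equality of the normalized vectors $a_j/\|a_j\|$.) *)

theory Defs
  imports Complex_Main
begin

(* Sampling rate vectors: a i j = a_{i,j}, i < I (component), j < J (read type).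
   Parameters theta :: nat => real, components i < I. Count vectors :: nat => nat, entries j < J. *)

definition dotp :: "nat \<Rightarrow> (nat \<Rightarrow> real) \<Rightarrow> (nat \<Rightarrow> nat \<Rightarrow> real) \<Rightarrow> nat \<Rightarrow> real" where
  "dotp I \<theta> a j = (\<Sum>i<I. \<theta> i * a i j)"

definition pois_pmf :: "nat \<Rightarrow> nat \<Rightarrow> (nat \<Rightarrow> nat \<Rightarrow> real) \<Rightarrow> (nat \<Rightarrow> real) \<Rightarrow> (nat \<Rightarrow> nat) \<Rightarrow> real" where
  "pois_pmf I J a \<theta> n =
     (\<Prod>j<J. (dotp I \<theta> a j) ^ (n j) * exp (- dotp I \<theta> a j) / fact (n j))"

definition pos_multiple :: "nat \<Rightarrow> (nat \<Rightarrow> nat \<Rightarrow> real) \<Rightarrow> nat \<Rightarrow> nat \<Rightarrow> bool" where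
  "pos_multiple I a j1 j2 = (\<exists>c::real. c > 0 \<and> (\<forall>i<I. a i j1 = c * a i j2))"

definition is_collapsing :: "nat \<Rightarrow> nat \<Rightarrow> (nat \<Rightarrow> nat \<Rightarrow> real) \<Rightarrow> nat set set \<Rightarrow> bool" where
  "is_collapsing I J a Cs =
     ((\<forall>C\<in>Cs. C \<noteq> {}) \<and> \<Union>Cs = {..<J} \<and>
      (\<forall>C1\<in>Cs. \<forall>C2\<in>Cs. C1 \<noteq> C2 \<longrightarrow> C1 \<inter> C2 = {}) \<and>
      (\<forall>C\<in>Cs. \<forall>j1\<in>C. \<forall>j2\<in>C. pos_multiple I a j1 j2))"

definition is_maximal_collapsing :: "nat \<Rightarrow> nat \<Rightarrow> (nat \<Rightarrow> nat \<Rightarrow> real) \<Rightarrow> nat set set \<Rightarrow> bool" where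
  "is_maximal_collapsing I J a Cs =
     (is_collapsing I J a Cs \<and>
      (\<forall>C1\<in>Cs. \<forall>C2\<in>Cs. C1 \<noteq> C2 \<longrightarrow> (\<forall>j1\<in>C1. \<forall>j2\<in>C2. \<not> pos_multiple I a j1 j2)))"

(* The statistic T(n) = (n_{C_1},...,n_{C_K}), indexed by the categories themselves *)
definition collapsed_stat :: "nat set set \<Rightarrow> (nat \<Rightarrow> nat) \<Rightarrow> nat set \<Rightarrow> nat" where
  "collapsed_stat Cs n = (\<lambda>C. if C \<in> Cs then (\<Sum>j\<in>C. n j) else 0)"

end

theory Submission
  imports Defs "HOL-Computational_Algebra.Polynomial"
begin

lemma dotp_pos:
  assumes "\<forall>i<I. \<theta> i > 0" "\<forall>i<I. a i j \<ge> 0" "\<exists>i<I. a i j \<noteq> 0"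
  shows "dotp I \<theta> a j > 0"
proof -
  obtain i where i: "i < I" "a i j \<noteq> 0" using assms(3) by blast
  have "0 < \<theta> i * a i j" using i assms(1,2) by (simp add: order_le_neq_trans)
  then show ?thesis unfolding dotp_def
    by (intro sum_pos2[where i=i]) (use i assms in \<open>auto intro: mult_nonneg_nonneg less_imp_le\<close>)
qed

lemma pmf_split:
  "pois_pmf I J a \<theta> n = (\<Prod>j<J. dotp I \<theta> a j ^ n j) * (\<Prod>j<J. exp (- dotp I \<theta> a j))
     / (\<Prod>j<J. fact (n j))"
  by (simp add: pois_pmf_def prod.distrib prod_dividef)

lemma order_prod_pow:
  fixes p :: "nat \<Rightarrow> real poly"
  assumes "finite A" "\<forall>j\<in>A. p j \<noteq> 0"
  shows "order t (\<Prod>j\<in>A. p j ^ n j) = (\<Sum>j\<in>A. n j * order t (p j))"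
  using assms
proof (induction A rule: finite_induct)
  case empty then show ?case by simp
next
  case (insert k A)
  have nz: "(\<Prod>j\<in>A. p j ^ n j) \<noteq> 0" using insert by (simp add: prod_zero_iff)
  have pw: "order t (p k ^ m) = m * order t (p k)" for m
  proof (induction m)
    case 0 then show ?case by simp
  next
    case (Suc m)
    have "order t (p k ^ Suc m) = order t (p k * p k ^ m)" by simp
    also have "\<dots> = order t (p k) + order t (p k ^ m)"
      by (rule order_mult) (use insert in simp)
    finally show ?case using Suc by simp
  qed
  have "order t (\<Prod>j\<in>insert k A. p j ^ n j) = order t (p k ^ n k * (\<Prod>j\<in>A. p j ^ n j))"
    using insert by simp
  also have "\<dots> = order t (p k ^ n k) + order t (\<Prod>j\<in>A. p j ^ n j)"
    by (rule order_mult) (use insert nz in simp)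
  finally show ?case using insert pw by simp
qed

lemma order_lin:
  fixes al be t :: real
  assumes "be \<noteq> 0"
  shows "order t [:al, be:] = (if al + t * be = 0 then 1 else 0)"
proof (cases "al + t * be = 0")
  case True
  have "[:al, be:] = smult be [:-t, 1:]" using True assms
    by (simp add: field_simps)
  then have "order t [:al, be:] = order t (smult be [:-t, 1:])" by (simp only:)
  also have "\<dots> = order t [:-t, 1:]" by (rule order_smult[OF assms])
  also have "\<dots> = order t ([:-t, 1:]^1)" by simp
  also have "\<dots> = 1" by (rule order_power_n_n)
  finally show ?thesis using True by simp
next
  case False
  then show ?thesis by (intro order_0I[THEN trans]) (auto simp: algebra_simps)
qed

lemma avoid:
  fixes W :: "(nat \<Rightarrow> real) set"
  assumes "finite W" "\<forall>w\<in>W. \<exists>i<I. w i \<noteq> 0"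
  shows "\<exists>q. (\<forall>i. q i > 0) \<and> (\<forall>w\<in>W. (\<Sum>i<I. q i * w i) \<noteq> 0)"
proof -
  define P where "P w = (\<Sum>i<I. monom (w i) i)" for w :: "nat \<Rightarrow> real"
  have cP: "coeff (P w) k = (if k < I then w k else 0)" for w k
    by (simp add: P_def coeff_sum)
  have Pnz: "P w \<noteq> 0" if "w \<in> W" for w
  proof
    assume "P w = 0"
    then have "\<forall>k<I. w k = 0" using cP by (metis coeff_0)
    then show False using assms(2) that by blast
  qed
  have pP: "poly (P w) s = (\<Sum>i<I. s ^ i * w i)" for w s
    by (simp add: P_def poly_sum poly_monom mult.commute)
  define R where "R = (\<Union>w\<in>W. {s. poly (P w) s = 0})"
  have "finite R" unfolding R_def using assms(1) Pnz poly_roots_finite by blast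
  moreover have "infinite {0::real<..}" by (simp add: infinite_Ioi)
  ultimately obtain s where s: "s \<in> {0::real<..}" "s \<notin> R"
    by (meson finite_subset subsetI)
  show ?thesis
  proof (intro exI[of _ "\<lambda>i. s ^ i"] conjI ballI allI)
    show "0 < s ^ i" for i using s by simp
    fix w assume "w \<in> W"
    then show "(\<Sum>i<I. s ^ i * w i) \<noteq> 0" using s pP unfolding R_def by auto
  qed
qed


theorem theorem1:
  fixes I J :: nat and a :: "nat \<Rightarrow> nat \<Rightarrow> real" and Cs :: "nat set set"
    and x y :: "nat \<Rightarrow> nat"
  assumes "I > 0" and "J > 0"
    and "\<forall>i<I. \<forall>j<J. a i j \<ge> 0"
    and "\<forall>j<J. \<exists>i<I. a i j \<noteq> 0"
    and "is_maximal_collapsing I J a Cs"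
  shows "(\<exists>r::real. \<forall>\<theta>::nat \<Rightarrow> real. (\<forall>i<I. \<theta> i > 0) \<longrightarrow>
            pois_pmf I J a \<theta> x / pois_pmf I J a \<theta> y = r)
         \<longleftrightarrow> collapsed_stat Cs x = collapsed_stat Cs y"
proof -
  note nn = assms(3) and nz = assms(4)
  have coll: "is_collapsing I J a Cs" and maxc: "\<forall>C1\<in>Cs. \<forall>C2\<in>Cs. C1 \<noteq> C2 \<longrightarrow> (\<forall>j1\<in>C1. \<forall>j2\<in>C2. \<not> pos_multiple I a j1 j2)"
    using assms(5) unfolding is_maximal_collapsing_def by auto
  have Cne: "\<forall>C\<in>Cs. C \<noteq> {}" and UCs: "\<Union>Cs = {..<J}"
    and disj: "\<forall>C1\<in>Cs. \<forall>C2\<in>Cs. C1 \<noteq> C2 \<longrightarrow> C1 \<inter> C2 = {}"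
    and pm: "\<forall>C\<in>Cs. \<forall>j1\<in>C. \<forall>j2\<in>C. pos_multiple I a j1 j2"
    using coll unfolding is_collapsing_def by auto
  have Csub: "C \<subseteq> {..<J}" if "C \<in> Cs" for C using UCs that by blast
  have finC: "finite C" if "C \<in> Cs" for C using Csub[OF that] finite_subset by blast
  have finCs: "finite Cs" using Csub by (intro finite_subset[of Cs "Pow {..<J}"]) auto
  define d where "d \<theta> j = dotp I \<theta> a j" for \<theta> j
  define PA where "PA n \<theta> = (\<Prod>j<J. d \<theta> j ^ n j)" for n :: "nat \<Rightarrow> nat" and \<theta>
  define F where "F n = (\<Prod>j<J. fact (n j) :: real)" for n :: "nat \<Rightarrow> nat"
  have Fpos: "F n > 0" for n unfolding F_def by (intro prod_pos) auto
  have dpos: "d \<theta> j > 0" if "\<forall>i<I. \<theta> i > 0" "j < J" for \<theta> j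
    unfolding d_def using that nn nz by (intro dotp_pos) auto
  have PApos: "PA n \<theta> > 0" if "\<forall>i<I. \<theta> i > 0" for n \<theta>
    unfolding PA_def using dpos[OF that] by (intro prod_pos) auto
  have ratio: "pois_pmf I J a \<theta> x / pois_pmf I J a \<theta> y = PA x \<theta> * F y / (PA y \<theta> * F x)"
    if "\<forall>i<I. \<theta> i > 0" for \<theta>
  proof -
    define E where "E = (\<Prod>j<J. exp (- dotp I \<theta> a j))"
    have "E > 0" unfolding E_def by (intro prod_pos) auto
    then show ?thesis using PApos[OF that, of y] Fpos[of x] Fpos[of y]
      unfolding pmf_split PA_def[symmetric] d_def[symmetric] F_def[symmetric]
      by (simp add: PA_def d_def E_def[symmetric] field_simps)
  qed
  define one where "one = (\<lambda>i::nat. 1::real)"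
  have onepos: "\<forall>i<I. one i > 0" by (simp add: one_def)
  show ?thesis
  proof
    assume cs: "collapsed_stat Cs x = collapsed_stat Cs y"
    have Seq: "(\<Sum>j\<in>C. x j) = (\<Sum>j\<in>C. y j)" if "C \<in> Cs" for C
    proof -
      have "collapsed_stat Cs x C = collapsed_stat Cs y C" using cs by simp
      then show ?thesis using that by (simp add: collapsed_stat_def)
    qed
    have G: "(\<Prod>j\<in>C. d \<theta> j ^ x j) * (\<Prod>j\<in>C. d one j ^ y j)
           = (\<Prod>j\<in>C. d one j ^ x j) * (\<Prod>j\<in>C. d \<theta> j ^ y j)" if C: "C \<in> Cs" for C \<theta>
    proof -
      obtain j0 where j0: "j0 \<in> C" using Cne C by blast
      have "\<forall>j\<in>C. \<exists>c. c > 0 \<and> (\<forall>i<I. a i j = c * a i j0)"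
        using pm C j0 unfolding pos_multiple_def by blast
      then obtain cf where cf: "\<forall>j\<in>C. \<forall>i<I. a i j = cf j * a i j0" by metis
      have dj: "d th j = cf j * d th j0" if "j \<in> C" for th j
        using cf that unfolding d_def dotp_def by (simp add: sum_distrib_left mult_ac)
      have P: "(\<Prod>j\<in>C. d th j ^ n j) = (\<Prod>j\<in>C. cf j ^ n j) * d th j0 ^ (\<Sum>j\<in>C. n j)" for th n
      proof -
        have "(\<Prod>j\<in>C. d th j ^ n j) = (\<Prod>j\<in>C. cf j ^ n j * d th j0 ^ n j)"
          by (rule prod.cong) (simp_all add: dj power_mult_distrib)
        then show ?thesis by (simp add: prod.distrib power_sum)
      qed
      show ?thesis unfolding P using Seq[OF C] by (simp add: mult_ac)
    qed
    have PAU: "PA n th = (\<Prod>C\<in>Cs. \<Prod>j\<in>C. d th j ^ n j)" for n th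
      unfolding PA_def UCs[symmetric] using prod.Union_disjoint[of Cs "\<lambda>j. d th j ^ n j"] finC disj
      by simp
    have key: "PA x th * PA y one = PA x one * PA y th" for th
    proof -
      have "PA x th * PA y one = (\<Prod>C\<in>Cs. (\<Prod>j\<in>C. d th j ^ x j) * (\<Prod>j\<in>C. d one j ^ y j))"
        unfolding PAU by (rule prod.distrib[symmetric])
      also have "\<dots> = (\<Prod>C\<in>Cs. (\<Prod>j\<in>C. d one j ^ x j) * (\<Prod>j\<in>C. d th j ^ y j))"
        by (rule prod.cong[OF refl], rule G)
      also have "\<dots> = PA x one * PA y th"
        unfolding PAU by (rule prod.distrib)
      finally show ?thesis .
    qed
    show "\<exists>r. \<forall>\<theta>. (\<forall>i<I. 0 < \<theta> i) \<longrightarrow> pois_pmf I J a \<theta> x / pois_pmf I J a \<theta> y = r"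
    proof (intro exI allI impI)
      fix \<theta> :: "nat \<Rightarrow> real" assume th: "\<forall>i<I. 0 < \<theta> i"
      have "PA y \<theta> > 0" "PA y one > 0" using PApos th onepos by auto
      then show "pois_pmf I J a \<theta> x / pois_pmf I J a \<theta> y = PA x one * F y / (PA y one * F x)"
        unfolding ratio[OF th] using key[of \<theta>] Fpos[of x]
        by (simp add: field_simps)
    qed
  next
    assume "\<exists>r. \<forall>\<theta>. (\<forall>i<I. 0 < \<theta> i) \<longrightarrow> pois_pmf I J a \<theta> x / pois_pmf I J a \<theta> y = r"
    then obtain r where r: "\<And>\<theta>. \<forall>i<I. 0 < \<theta> i \<Longrightarrow> PA x \<theta> * F y / (PA y \<theta> * F x) = r"
      using ratio by metis
    show "collapsed_stat Cs x = collapsed_stat Cs y"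
    proof
      fix C
      show "collapsed_stat Cs x C = collapsed_stat Cs y C"
      proof (cases "C \<in> Cs")
        case False then show ?thesis by (simp add: collapsed_stat_def)
      next
        case C: True
        obtain j0 where j0: "j0 \<in> C" using Cne C by blast
        have j0J: "j0 < J" using j0 Csub[OF C] by blast
        define al where "al j = (\<Sum>i<I. a i j)" for j
        have alpos: "al j > 0" if "j < J" for j
          using dpos[OF onepos that] by (simp add: d_def dotp_def one_def al_def)
        define w where "w j = (\<lambda>i. al j * a i j0 - al j0 * a i j)" for j
        define W where "W = w ` ({..<J} - C) \<union> {\<lambda>i. a i j0}"
        have Wnz: "\<forall>v\<in>W. \<exists>i<I. v i \<noteq> 0"
        proof
          fix v assume "v \<in> W"
          then consider (a) "v = (\<lambda>i. a i j0)" | (b) j where "j < J" "j \<notin> C" "v = w j"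
            unfolding W_def by blast
          then show "\<exists>i<I. v i \<noteq> 0"
          proof cases
            case a then show ?thesis using nz j0J by auto
          next
            case b
            show ?thesis
            proof (rule ccontr)
              assume "\<not> (\<exists>i<I. v i \<noteq> 0)"
              then have "\<forall>i<I. a i j = (al j / al j0) * a i j0"
                using b alpos[OF j0J] by (auto simp: w_def field_simps)
              then have pmj: "pos_multiple I a j j0"
                unfolding pos_multiple_def using alpos[OF j0J] alpos[OF b(1)]
                by (intro exI[of _ "al j / al j0"]) auto
              obtain C' where C': "C' \<in> Cs" "j \<in> C'" using UCs b(1) by blast
              have "C' \<noteq> C" using C' b(2) by blast
              then show False using maxc C' C j0 pmj by blast
            qed
          qed
        qed
        have "finite W" unfolding W_def by simp
        then obtain q where qpos: "\<forall>i. q i > 0" and qW: "\<forall>v\<in>W. (\<Sum>i<I. q i * v i) \<noteq> 0"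
          using avoid Wnz by blast
        define be where "be j = (\<Sum>i<I. q i * a i j)" for j
        have be0: "be j0 \<noteq> 0" using qW unfolding W_def be_def by auto
        define th where "th t = (\<lambda>i. 1 + t * q i)" for t :: real
        have dth: "d (th t) j = al j + t * be j" for t j
          by (simp add: d_def dotp_def th_def al_def be_def algebra_simps sum.distrib sum_distrib_left)
        have thpos: "\<forall>i<I. th t i > 0" if "t \<ge> 0" for t
          using qpos that unfolding th_def by (smt (verit) mult_nonneg_nonneg)
        have th0: "th 0 = one" by (simp add: th_def one_def)
        define PX where "PX n = (\<Prod>j<J. [:al j, be j:] ^ n j)" for n :: "nat \<Rightarrow> nat"
        have pPX: "poly (PX n) t = PA n (th t)" for n t
          by (simp add: PX_def PA_def poly_prod dth algebra_simps)
        have eq: "PA x (th t) * PA y one = PA x one * PA y (th t)" if "t \<ge> 0" for t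
        proof -
          have "PA x (th t) * F y / (PA y (th t) * F x) = PA x one * F y / (PA y one * F x)"
            using r[OF thpos[OF that]] r[OF onepos] by simp
          moreover have "PA y (th t) > 0" "PA y one > 0" using PApos thpos[OF that] onepos by auto
          ultimately show ?thesis using Fpos[of x] Fpos[of y] by (simp add: field_simps)
        qed
        define D where "D = smult (PA y one) (PX x) - smult (PA x one) (PX y)"
        have "{0..} \<subseteq> {t. poly D t = 0}" using eq by (auto simp: D_def pPX mult.commute)
        then have "D = 0" using poly_roots_finite[of D] infinite_Ici[of "0::real"]
          using finite_subset by blast
        then have sm: "smult (PA y one) (PX x) = smult (PA x one) (PX y)" by (simp add: D_def)
        define t0 where "t0 = - al j0 / be j0"
        have ordlin: "order t0 [:al j, be j:] = (if j \<in> C then 1 else 0)" if "j < J" for j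
        proof (cases "j \<in> C")
          case True
          then obtain c where c: "c > 0" "\<forall>i<I. a i j = c * a i j0"
            using pm C j0 unfolding pos_multiple_def by blast
          have "al j = c * al j0" "be j = c * be j0"
            using c by (simp_all add: al_def be_def sum_distrib_left mult_ac)
          then have "be j \<noteq> 0" "al j + t0 * be j = 0" using c be0 by (auto simp: t0_def field_simps)
          then show ?thesis using order_lin True by simp
        next
          case False
          have "w j \<in> W" using False that unfolding W_def by blast
          then have "(\<Sum>i<I. q i * w j i) \<noteq> 0" using qW by blast
          moreover have "(\<Sum>i<I. q i * w j i) = al j * be j0 - al j0 * be j"
            by (simp add: w_def be_def algebra_simps sum_subtractf sum_distrib_left)
          ultimately have ne: "al j * be j0 - al j0 * be j \<noteq> 0" by simp
          have "al j + t0 * be j \<noteq> 0"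
          proof
            assume "al j + t0 * be j = 0"
            then have "(al j + t0 * be j) * be j0 = 0" by simp
            then have "al j * be j0 - al j0 * be j = 0" using be0 by (simp add: t0_def field_simps)
            then show False using ne by simp
          qed
          then have "order t0 [:al j, be j:] = 0" by (intro order_0I) (simp add: algebra_simps)
          then show ?thesis using False by simp
        qed
        have lin_nz: "\<forall>j\<in>{..<J}. [:al j, be j:] \<noteq> 0" using alpos by (metis lessThan_iff less_irrefl pCons_eq_0_iff)
        have ordPX: "order t0 (PX n) = (\<Sum>j\<in>C. n j)" for n
        proof -
          have "order t0 (PX n) = (\<Sum>j<J. n j * order t0 [:al j, be j:])"
            unfolding PX_def by (rule order_prod_pow) (use lin_nz in auto)
          also have "\<dots> = (\<Sum>j<J. if j \<in> C then n j else 0)"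
            by (rule sum.cong) (simp_all add: ordlin)
          also have "\<dots> = (\<Sum>j\<in>{..<J} \<inter> C. n j)" by (simp add: sum.inter_restrict)
          also have "{..<J} \<inter> C = C" using Csub[OF C] by blast
          finally show ?thesis .
        qed
        have "PA y one > 0" "PA x one > 0" using PApos onepos by auto
        then have "order t0 (PX x) = order t0 (PX y)"
          using arg_cong[OF sm, of "order t0"] order_smult[of "PA y one" t0 "PX x"] order_smult[of "PA x one" t0 "PX y"] by simp
        then show ?thesis using C by (simp add: collapsed_stat_def ordPX)
      qed
    qed
  qed
qed

end
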